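(* Let $f=f_0+f_1i+f_2j+f_3k\colon M\to\mathbb H$ be a minimal surface with conjugate $f^*=f_0^*+f_1^*i+f_2^*j+f_3^*k$, and let $\sigma=e^{s+\mathbf i t}\in\mathfrak C_*$. Then, up to translation, the López–Ros deformation of $f$ is $$f^\sigma=\begin{pmatrix}f_0\\ \cos t\,(f_1\cosh s-f_2^*\sinh s)-\sin t\,(f_2\cosh s+f_1^*\sinh s)\\ \sin t\,(f_1\cosh s-f_2^*\sinh s)+\cos t\,(f_2\cosh s+f_1^*\sinh s)\\ f_3\end{pmatrix}.$$ Moreover, if $|\sigma|\neq1$, then $f^\sigma$ is the simple factor dressing of $f$ with parameters $(\mu,m,m)$ where $\mu=\frac{1-e^{-(s+it)}}{1-e^{s-it}}\in\mathbb C\setminus\{0,1\}$ and $m=\frac{1-i-j-k}2$.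
   Context: Quaternions $\mathbb H$, basis $1,i,j,k$, $\mathbb C=\operatorname{span}_{\mathbb R}\{1,i\}\subset\mathbb H$; $\mathfrak C=\mathbb R\oplus\mathbf i\mathbb R$ with complex unit $\mathbf i$ distinct from $i$, $\mathfrak C_*=\mathfrak C\setminus\{0\}$. Conjugate surface: $df^*=-*df$, $*\omega(X)=\omega(JX)$; $\Phi=f+\mathbf i f^*=(\Phi_0,\Phi_1,\Phi_2,\Phi_3)$. Weierstrass data: $\omega=d\Phi_1-\mathbf i\,d\Phi_2$, $g_1=d\Phi_3/\omega$, $g_2=d\Phi_0/\omega$. The López–Ros deformation with parameter $\sigma$ is $\operatorname{Re}\int\big(\tilde g_2\tilde\omega,\tfrac12(1-\tilde g_1^2-\tilde g_2^2)\tilde\omega,\tfrac{\mathbf i}2(1+\tilde g_1^2+\tilde g_2^2)\tilde\omega,\tilde g_1\tilde\omega\big)$ with $(\tilde g_1,\tilde g_2,\tilde\omega)=(\sigma g_1,\sigma g_2,\omega/\sigma)$. Simple factor dressing: for $\mu\in\mathbb C\setminus\{0,1\}$, $a=\frac{\mu+\mu^{-1}}2$, $b=i\frac{\mu^{-1}-\mu}2$, $m,n\in\mathbb H_*$: $\hat f=-f\frac{m(a-1)m^{-1}}2+f^*\frac{mbm^{-1}}2-n\frac{b}{a-1}n^{-1}\big(f\frac{mbm^{-1}}2+f^*\frac{m(a-1)m^{-1}}2\big)$. *)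

theory Defs
  imports "HOL-Analysis.Analysis"
begin

text \<open>A quaternion q = q0 + q1 i + q2 j + q3 k is represented by the vector
  with components q $ 0, q $ 1, q $ 2, q $ 3 (index type 4 = {0,1,2,3}).\<close>

type_synonym quat = "real ^ 4"

definition Quat :: "real \<Rightarrow> real \<Rightarrow> real \<Rightarrow> real \<Rightarrow> quat" where
  "Quat a b c d = (\<chi> n. if n = 0 then a else if n = 1 then b else if n = 2 then c else d)"

definition qmul :: "quat \<Rightarrow> quat \<Rightarrow> quat" where
  "qmul p q = Quat
     (p$0 * q$0 - p$1 * q$1 - p$2 * q$2 - p$3 * q$3)
     (p$0 * q$1 + p$1 * q$0 + p$2 * q$3 - p$3 * q$2)
     (p$0 * q$2 - p$1 * q$3 + p$2 * q$0 + p$3 * q$1)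
     (p$0 * q$3 + p$1 * q$2 - p$2 * q$1 + p$3 * q$0)"

definition qconj :: "quat \<Rightarrow> quat" where
  "qconj q = Quat (q$0) (- q$1) (- q$2) (- q$3)"

definition qinv :: "quat \<Rightarrow> quat" where
  "qinv q = (1 / (norm q)\<^sup>2) *\<^sub>R qconj q"

text \<open>The quaternion unit 1 (note: the numeral 1 in real^4 is (1,1,1,1), not this).\<close>
definition qone :: quat where "qone = Quat 1 0 0 0"

definition cq :: "complex \<Rightarrow> quat" where
  "cq z = Quat (Re z) (Im z) 0 0"

text \<open>Local coordinate z on U \<subseteq> C; the complex structure J of M is multiplication by
  the complex unit on tangent vectors h :: complex.\<close>

definition conformal_immersion_on :: "complex set \<Rightarrow> (complex \<Rightarrow> quat) \<Rightarrow> bool" where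
  "conformal_immersion_on U f \<longleftrightarrow> (\<exists>Df. \<forall>z\<in>U.
      (f has_derivative Df z) (at z) \<and> Df z 1 \<noteq> 0 \<and>
      Df z 1 \<bullet> Df z 1 = Df z \<i> \<bullet> Df z \<i> \<and> Df z 1 \<bullet> Df z \<i> = 0)"

definition harmonic_on :: "complex set \<Rightarrow> (complex \<Rightarrow> quat) \<Rightarrow> bool" where
  "harmonic_on U f \<longleftrightarrow> (\<exists>Df D2f. \<forall>z\<in>U.
      (f has_derivative Df z) (at z) \<and>
      (\<forall>h. ((\<lambda>w. Df w h) has_derivative D2f z h) (at z)) \<and>
      D2f z 1 1 + D2f z \<i> \<i> = 0)"

text \<open>A minimal surface: a conformal immersion with vanishing mean curvature,
  equivalently (for conformal immersions) a harmonic conformal immersion.\<close>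
definition minimal_surface_on :: "complex set \<Rightarrow> (complex \<Rightarrow> quat) \<Rightarrow> bool" where
  "minimal_surface_on U f \<longleftrightarrow> conformal_immersion_on U f \<and> harmonic_on U f"

definition conjugate_surface_on :: "complex set \<Rightarrow> (complex \<Rightarrow> quat) \<Rightarrow> (complex \<Rightarrow> quat) \<Rightarrow> bool" where
  "conjugate_surface_on U f fs \<longleftrightarrow> (\<exists>Df Dfs. \<forall>z\<in>U.
      (f has_derivative Df z) (at z) \<and> (fs has_derivative Dfs z) (at z) \<and>
      (\<forall>h. Dfs z h = - Df z (\<i> * h)))"

text \<open>Phi = f + \<i> f*, component k (values in the complex numbers with unit \<i>,
  distinct from the quaternion i).\<close>
definition Phi :: "(complex \<Rightarrow> quat) \<Rightarrow> (complex \<Rightarrow> quat) \<Rightarrow> 4 \<Rightarrow> complex \<Rightarrow> complex" where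
  "Phi f fs k z = Complex (f z $ k) (fs z $ k)"

definition dPhi :: "(complex \<Rightarrow> quat) \<Rightarrow> (complex \<Rightarrow> quat) \<Rightarrow> 4 \<Rightarrow> complex \<Rightarrow> complex" where
  "dPhi f fs k z = deriv (Phi f fs k) z"

definition W_omega :: "(complex \<Rightarrow> quat) \<Rightarrow> (complex \<Rightarrow> quat) \<Rightarrow> complex \<Rightarrow> complex" where
  "W_omega f fs z = dPhi f fs 1 z - \<i> * dPhi f fs 2 z"

definition W_g1 :: "(complex \<Rightarrow> quat) \<Rightarrow> (complex \<Rightarrow> quat) \<Rightarrow> complex \<Rightarrow> complex" where
  "W_g1 f fs z = dPhi f fs 3 z / W_omega f fs z"

definition W_g2 :: "(complex \<Rightarrow> quat) \<Rightarrow> (complex \<Rightarrow> quat) \<Rightarrow> complex \<Rightarrow> complex" where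
  "W_g2 f fs z = dPhi f fs 0 z / W_omega f fs z"

definition LR_forms :: "(complex \<Rightarrow> quat) \<Rightarrow> (complex \<Rightarrow> quat) \<Rightarrow> complex \<Rightarrow> complex \<Rightarrow> complex list" where
  "LR_forms f fs \<sigma> z =
    (let g1 = \<sigma> * W_g1 f fs z; g2 = \<sigma> * W_g2 f fs z; w = W_omega f fs z / \<sigma> in
     [g2 * w,
      (1 - g1\<^sup>2 - g2\<^sup>2) / 2 * w,
      \<i> / 2 * (1 + g1\<^sup>2 + g2\<^sup>2) * w,
      g1 * w])"

text \<open>F is (a representative of) the Lopez--Ros deformation F = Re \<integral>(...):
  F is continuous on U and its differential equals the real part of the
  deformed forms wherever the Weierstrass data is defined (\<omega> \<noteq> 0).\<close>
definition lopez_ros_deformation ::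
  "complex set \<Rightarrow> (complex \<Rightarrow> quat) \<Rightarrow> (complex \<Rightarrow> quat) \<Rightarrow> complex \<Rightarrow> (complex \<Rightarrow> quat) \<Rightarrow> bool" where
  "lopez_ros_deformation U f fs \<sigma> F \<longleftrightarrow> continuous_on U F \<and>
     (\<forall>z\<in>U. W_omega f fs z \<noteq> 0 \<longrightarrow>
        (F has_derivative (\<lambda>h. let A = LR_forms f fs \<sigma> z in
            Quat (Re (A!0 * h)) (Re (A!1 * h)) (Re (A!2 * h)) (Re (A!3 * h)))) (at z))"

definition qconjby :: "quat \<Rightarrow> quat \<Rightarrow> quat" where
  "qconjby m x = qmul (qmul m x) (qinv m)"

definition simple_factor_dressing ::
  "complex \<Rightarrow> quat \<Rightarrow> quat \<Rightarrow> (complex \<Rightarrow> quat) \<Rightarrow> (complex \<Rightarrow> quat) \<Rightarrow> complex \<Rightarrow> quat" where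
  "simple_factor_dressing \<mu> m n f fs z =
    (let a = cq ((\<mu> + inverse \<mu>) / 2);
         b = qmul (cq \<i>) (cq ((inverse \<mu> - \<mu>) / 2));
         am1 = a - qone in
     - qmul (f z) ((1/2) *\<^sub>R qconjby m am1)
     + qmul (fs z) ((1/2) *\<^sub>R qconjby m b)
     - qmul (qconjby n (qmul b (qinv am1)))
         (qmul (f z) ((1/2) *\<^sub>R qconjby m b) + qmul (fs z) ((1/2) *\<^sub>R qconjby m am1)))"

end

theory Submission imports Defs "HOL-Complex_Analysis.Complex_Analysis" begin

lemma Quat_nth[simp]: "Quat a b c d $ 0 = a" "Quat a b c d $ 1 = b" "Quat a b c d $ 2 = c" "Quat a b c d $ 3 = d"
  by (simp_all add: Quat_def)

lemma quat_eq_iff: "(x::quat) = y \<longleftrightarrow> x$0 = y$0 \<and> x$1 = y$1 \<and> x$2 = y$2 \<and> x$3 = y$3"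
proof -
  have "(4::4) = 0" by simp
  then show ?thesis unfolding vec_eq_iff forall_4 by metis
qed

lemma Quat_eq: "x = Quat (x$0) (x$1) (x$2) (x$3)"
  by (simp add: quat_eq_iff)

lemma Quat_add: "Quat a b c d + Quat a' b' c' d' = Quat (a+a') (b+b') (c+c') (d+d')"
  by (simp add: quat_eq_iff)
lemma Quat_diff: "Quat a b c d - Quat a' b' c' d' = Quat (a-a') (b-b') (c-c') (d-d')"
  by (simp add: quat_eq_iff)
lemma Quat_minus: "- Quat a b c d = Quat (-a) (-b) (-c) (-d)"
  by (simp add: quat_eq_iff)
lemma Quat_scaleR: "r *\<^sub>R Quat a b c d = Quat (r*a) (r*b) (r*c) (r*d)"
  by (simp add: quat_eq_iff)
lemma Quat_zero: "0 = Quat 0 0 0 0"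
  by (simp add: quat_eq_iff)

lemma inner_quat: "(x::quat) \<bullet> y = x$0*y$0 + x$1*y$1 + x$2*y$2 + x$3*y$3"
proof -
  have "(4::4) = 0" by simp
  then show ?thesis unfolding inner_vec_def sum_4 by (simp only:) (simp add: ac_simps)
qed

lemma norm_quat_sq: "(norm (x::quat))\<^sup>2 = x$0^2 + x$1^2 + x$2^2 + x$3^2"
  unfolding power2_norm_eq_inner inner_quat by (simp add: power2_eq_square)

lemma cq_mult: "qmul (cq z) (cq w) = cq (z*w)"
  by (simp add: qmul_def cq_def quat_eq_iff)

lemma qinv_cq: "qinv (cq z) = cq (inverse z)"
  by (simp add: qinv_def cq_def qconj_def norm_quat_sq quat_eq_iff Quat_scaleR Re_divide Im_divide cmod_def)

lemma qconjby_m_cq: "qconjby (Quat (1/2) (-1/2) (-1/2) (-1/2)) (cq z) = Quat (Re z) 0 0 (Im z)"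
  by (simp add: qconjby_def qinv_def qconj_def norm_quat_sq qmul_def cq_def Quat_scaleR quat_eq_iff) (simp add: field_simps power2_eq_square)

lemma mu_facts:
  fixes s t :: real assumes s: "s \<noteq> 0"
  defines "\<mu> \<equiv> (1 - exp (- Complex s t)) / (1 - exp (Complex s (- t)))"
  defines "A0 \<equiv> (\<mu> + inverse \<mu>) / 2 - 1"
  defines "B0 \<equiv> \<i> * ((inverse \<mu> - \<mu>) / 2)"
  shows "\<mu> \<noteq> 0" "\<mu> \<noteq> 1"
    "A0 = - complex_of_real ((sinh s)^2 / (cosh s - cos t)) * cis (- t)"
    "B0 / A0 = complex_of_real (1 / sinh s) * Complex (sin t) (cosh s - cos t)"
    "A0 \<noteq> 0"
proof -
  define E where "E = exp s"
  define e where "e = complex_of_real E"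
  define z where "z = cis t"
  have E0: "E > 0" unfolding E_def by simp
  have E1: "E \<noteq> 1" unfolding E_def using s by simp
  have e0: "e \<noteq> 0" using E0 unfolding e_def by simp
  have z0: "z \<noteq> 0" unfolding z_def by simp
  have nz: "norm z = 1" unfolding z_def by simp
  have ez: "e * z \<noteq> 1"
  proof
    assume "e * z = 1" then have "norm (e*z) = 1" by simp
    then show False using E0 E1 nz unfolding e_def by (simp add: norm_mult)
  qed
  have ez2: "e \<noteq> z"
  proof
    assume "e = z" then have "norm e = 1" using nz by simp
    then show False using E0 E1 unfolding e_def by simp
  qed
  have ee: "e * e \<noteq> 1"
  proof
    assume "e * e = 1" then have "E * E = 1" unfolding e_def
      by (metis of_real_eq_1_iff of_real_mult)
    then show False using E0 E1 by (simp add: square_eq_1_iff)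
  qed
  have sig: "exp (Complex s t) = e * z" unfolding e_def z_def E_def
    by (simp add: exp_eq_polar)
  have sig2: "exp (- Complex s t) = inverse (e * z)"
    by (simp add: exp_minus sig)
  have sig3: "exp (Complex s (- t)) = e / z" unfolding e_def z_def E_def
    by (simp add: exp_eq_polar divide_inverse)
  have mu: "\<mu> = (e*z - 1) / (e * (z - e))"
    unfolding \<mu>_def sig2 sig3 using e0 z0 ez ez2 by (simp add: field_simps)
  show mu0: "\<mu> \<noteq> 0" unfolding mu using e0 ez ez2 by simp
  show "\<mu> \<noteq> 1"
  proof
    assume "\<mu> = 1"
    then have "e*z - 1 = e * (z - e)" unfolding mu using e0 ez2 by (simp add: divide_eq_1_iff)
    then have "e * e = 1" by (simp add: algebra_simps)
    then show False using ee by simp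
  qed
  have ch: "complex_of_real (cosh s) = (e + inverse e) / 2"
    unfolding e_def E_def cosh_def by (simp add: exp_minus)
  have sh: "complex_of_real (sinh s) = (e - inverse e) / 2"
    unfolding e_def E_def sinh_def by (simp add: exp_minus)
  have c: "complex_of_real (cos t) = (z + inverse z) / 2"
    unfolding z_def by (simp add: complex_eq_iff cis.code)
  have sn: "complex_of_real (sin t) = (z - inverse z) / (2 * \<i>)"
    unfolding z_def by (simp add: complex_eq_iff cis.code)
  have cz: "cis (- t) = inverse z" unfolding z_def by (simp add: cis_inverse)
  have d0: "(e + inverse e) / 2 - (z + inverse z) / 2 \<noteq> 0"
  proof
    assume a: "(e + inverse e) / 2 - (z + inverse z) / 2 = 0"
    have eq: "2*e*z*((e + inverse e) / 2 - (z + inverse z) / 2) = (e - z) * (e * z - 1)"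
      using e0 z0 by (simp add: field_simps)
    have "(e - z) * (e * z - 1) = 0" by (metis a eq mult_zero_right)
    then show False using ez ez2 by simp
  qed
  have sh0: "(e - inverse e) / 2 \<noteq> 0" using e0 ee by (simp add: field_simps)
  have dform: "(e + inverse e) / 2 - (z + inverse z) / 2 = (e - z) * (e * z - 1) / (2*e*z)"
    using e0 z0 by (simp add: field_simps)
  have shform: "((e - inverse e) / 2)^2 = (e*e - 1)^2 / (4*e*e)"
    using e0 by (simp add: field_simps power2_eq_square)
  have A0mu: "A0 = (\<mu> - 1)^2 / (2*\<mu>)"
    unfolding A0_def using mu0 by (simp add: field_simps power2_eq_square)
  have mu1: "\<mu> - 1 = (e*e - 1) / (e * (z - e))"
    unfolding mu using e0 ez2 by (simp add: field_simps)
  have ez1: "e * z - 1 \<noteq> 0" using ez by simp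
  have ez3: "z - e \<noteq> 0" "e - z \<noteq> 0" using ez2 by auto
  have aux1: "(X/(e*Y))^2/(2*(W/(e*Y))) = - ((X^2/(4*e*e)) / ((-Y)*W/(2*e*z))) * inverse z"
    if "Y \<noteq> 0" "W \<noteq> 0" for X Y W
    using that e0 z0 by (simp add: field_simps power2_eq_square)
  have mu': "\<mu> = (e*z - 1) / (e * (z - e))" by (rule mu)
  have "A0 = ((e*e - 1) / (e * (z - e)))^2 / (2 * ((e*z - 1) / (e * (z - e))))"
    unfolding A0mu mu1 by (simp add: mu)
  also have "\<dots> = - (((e*e-1)^2/(4*e*e)) / ((-(z-e))*(e*z-1)/(2*e*z))) * inverse z"
    by (rule aux1) (use ez1 ez3 in auto)
  also have "\<dots> = - complex_of_real ((sinh s)^2 / (cosh s - cos t)) * cis (- t)"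
    unfolding of_real_divide of_real_power of_real_diff ch sh c cz dform shform by simp
  finally show A0: "A0 = - complex_of_real ((sinh s)^2 / (cosh s - cos t)) * cis (- t)" .
  have "complex_of_real (sinh s) \<noteq> 0" using sh sh0 s by simp
  moreover have "complex_of_real (cosh s - cos t) = (e + inverse e) / 2 - (z + inverse z) / 2"
    unfolding of_real_diff ch c by simp
  then have "complex_of_real (cosh s - cos t) \<noteq> 0" using d0 by simp
  ultimately show A0nz: "A0 \<noteq> 0" unfolding A0 by simp
  show "B0 / A0 = complex_of_real (1 / sinh s) * Complex (sin t) (cosh s - cos t)"
  proof -
    have mun1: "1 - \<mu> \<noteq> 0" using \<open>\<mu> \<noteq> 1\<close> by simp
    have ee1: "e*e - 1 \<noteq> 0" "1 - e*e \<noteq> 0" using ee by auto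
    have "B0 = \<i> * (1 + \<mu>) / (1 - \<mu>) * A0"
      unfolding A0mu B0_def using mu0 mun1 by (simp add: field_simps power2_eq_square)
    then have "B0 / A0 = \<i> * (1 + \<mu>) / (1 - \<mu>)" using A0nz by simp
    also have "\<dots> = \<i> * ((2*e*z - 1 - e*e)/(e*(z-e))) / ((1 - e*e)/(e*(z-e)))"
    proof -
      have "1 + \<mu> = (2*e*z - 1 - e*e)/(e*(z-e))" unfolding mu using e0 ez3 by (simp add: field_simps)
      moreover have "1 - \<mu> = (1 - e*e)/(e*(z-e))" unfolding mu using e0 ez3 by (simp add: field_simps)
      ultimately show ?thesis by simp
    qed
    also have "\<dots> = \<i> * (2*e*z - 1 - e*e) / (1 - e*e)"
    proof -
      have g: "\<i> * (X/D) / (Y/D) = \<i> * X / Y" if "D \<noteq> 0" for X Y D :: complex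
        using that by (cases "Y = 0") (simp_all add: field_simps)
      show ?thesis by (rule g) (use e0 ez3 in simp)
    qed
    also have "\<dots> = complex_of_real (1 / sinh s) * Complex (sin t) (cosh s - cos t)"
      unfolding Complex_eq of_real_divide of_real_diff sh sn ch c dform
      using e0 z0 ee1 by (simp add: field_simps)
    finally show ?thesis .
  qed
qed

lemma final_alg:
  fixes ch sh c sn d r :: real and p q :: quat
  assumes h1: "ch^2 = 1 + sh^2" and h2: "sn^2 = 1 - c^2" and hd: "d = ch - c" and d0: "d \<noteq> 0" and sh0: "sh \<noteq> 0"
    and hr: "r = sh^2 / d"
  defines "ReA \<equiv> - r * c" and "ImA \<equiv> r * sn" and "ReC \<equiv> sn / sh" and "ImC \<equiv> d / sh"
  defines "ReB \<equiv> ReC * ReA - ImC * ImA" and "ImB \<equiv> ReC * ImA + ImC * ReA"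
  shows "- qmul p ((1/2) *\<^sub>R Quat ReA 0 0 ImA) + qmul q ((1/2) *\<^sub>R Quat ReB 0 0 ImB)
     - qmul (Quat ReC 0 0 ImC) (qmul p ((1/2) *\<^sub>R Quat ReB 0 0 ImB) + qmul q ((1/2) *\<^sub>R Quat ReA 0 0 ImA))
   = Quat (p $ 0)
            (c * (p $ 1 * ch - q $ 2 * sh) - sn * (p $ 2 * ch + q $ 1 * sh))
            (sn * (p $ 1 * ch - q $ 2 * sh) + c * (p $ 2 * ch + q $ 1 * sh))
            (p $ 3)"
  unfolding quat_eq_iff ReB_def ImB_def ReA_def ImA_def ReC_def ImC_def
  apply (simp add: qmul_def Quat_scaleR Quat_add Quat_diff Quat_minus)
  apply (simp add: hr field_simps d0 sh0)
  apply (insert h1 h2 hd)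
  apply (intro conjI)
     apply algebra
    apply algebra
   apply algebra
  apply algebra
  done
lemma dressing:
  fixes s t :: real and f fs :: "complex \<Rightarrow> quat" and z :: complex
  assumes s: "s \<noteq> 0"
  defines "\<mu> \<equiv> (1 - exp (- Complex s t)) / (1 - exp (Complex s (- t)))"
  shows "simple_factor_dressing \<mu> (Quat (1/2) (-1/2) (-1/2) (-1/2)) (Quat (1/2) (-1/2) (-1/2) (-1/2)) f fs z =
     Quat (f z $ 0)
            (cos t * (f z $ 1 * cosh s - fs z $ 2 * sinh s) - sin t * (f z $ 2 * cosh s + fs z $ 1 * sinh s))
            (sin t * (f z $ 1 * cosh s - fs z $ 2 * sinh s) + cos t * (f z $ 2 * cosh s + fs z $ 1 * sinh s))
            (f z $ 3)"
proof -
  define A0 where "A0 = (\<mu> + inverse \<mu>) / 2 - 1"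
  define B0 where "B0 = \<i> * ((inverse \<mu> - \<mu>) / 2)"
  define m where "m = Quat (1/2) (-1/2) (-1/2) (-1/2)"
  define ch where "ch = cosh s"
  define sh where "sh = sinh s"
  define c where "c = cos t"
  define sn where "sn = sin t"
  define d where "d = ch - c"
  define r where "r = sh^2 / d"
  note mf = mu_facts[OF s, of t, folded \<mu>_def, folded A0_def B0_def]
  have sh0: "sh \<noteq> 0" unfolding sh_def sinh_zero_iff
  proof
    assume "exp s \<in> {1, - 1}"
    moreover have "exp s > 0" by simp
    ultimately have "exp s = 1" by auto
    then show False using s by simp
  qed
  have d0: "d \<noteq> 0" unfolding d_def ch_def c_def
    using cosh_real_ge_1[of s] cosh_real_one_iff[of s] s cos_le_one[of t] by linarith
  define C0 where "C0 = B0 / A0"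
  have e1: "cq ((\<mu> + inverse \<mu>)/2) - qone = cq A0"
    by (simp add: cq_def qone_def Quat_diff A0_def)
  have e2: "qmul (cq \<i>) (cq ((inverse \<mu> - \<mu>) / 2)) = cq B0"
    by (simp add: cq_mult B0_def)
  have e3: "qmul (cq B0) (qinv (cq A0)) = cq C0"
    by (simp add: qinv_cq cq_mult divide_inverse C0_def)
  have qA: "qconjby m (cq A0) = Quat (- r * c) 0 0 (r * sn)"
    unfolding m_def qconjby_m_cq mf(3) r_def d_def ch_def sh_def c_def sn_def by simp

  have B0eq: "B0 = C0 * A0" using mf(5) unfolding C0_def by simp
  have ReA: "Re A0 = - r * c" "Im A0 = r * sn"
    unfolding mf(3) r_def d_def ch_def sh_def c_def sn_def by simp_all
  have ReC: "Re C0 = sn / sh" "Im C0 = d / sh"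
    unfolding C0_def mf(4) d_def ch_def sh_def c_def sn_def by simp_all
  have qB: "qconjby m (cq B0) = Quat (sn / sh * (- r * c) - d / sh * (r * sn)) 0 0 (sn / sh * (r * sn) + d / sh * (- r * c))"
    unfolding m_def qconjby_m_cq B0eq times_complex.sel ReA ReC ..
  have fin: "- qmul p ((1/2) *\<^sub>R Quat (- r * c) 0 0 (r * sn)) + qmul q ((1/2) *\<^sub>R Quat (sn / sh * (- r * c) - d / sh * (r * sn)) 0 0 (sn / sh * (r * sn) + d / sh * (- r * c)))
     - qmul (Quat (sn / sh) 0 0 (d / sh)) (qmul p ((1/2) *\<^sub>R Quat (sn / sh * (- r * c) - d / sh * (r * sn)) 0 0 (sn / sh * (r * sn) + d / sh * (- r * c))) + qmul q ((1/2) *\<^sub>R Quat (- r * c) 0 0 (r * sn)))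
   = Quat (p $ 0)
            (c * (p $ 1 * ch - q $ 2 * sh) - sn * (p $ 2 * ch + q $ 1 * sh))
            (sn * (p $ 1 * ch - q $ 2 * sh) + c * (p $ 2 * ch + q $ 1 * sh))
            (p $ 3)" for p q
    by (rule final_alg) (use s d0 sh0 in \<open>auto simp: ch_def sh_def c_def sn_def d_def r_def cosh_square_eq sin_squared_eq\<close>)
  have qC: "qconjby m (cq C0) = Quat (sn / sh) 0 0 (d / sh)"
    unfolding m_def qconjby_m_cq ReC ..
  show ?thesis
    unfolding simple_factor_dressing_def Let_def m_def[symmetric] e1 e2 e3 qA qB qC
    using fin[of "f z" "fs z"] unfolding ch_def sh_def c_def sn_def .
qed

definition T1 :: "real \<Rightarrow> real \<Rightarrow> quat \<Rightarrow> quat \<Rightarrow> quat" where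
  "T1 s t p q = Quat (p $ 0)
            (cos t * (p $ 1 * cosh s - q $ 2 * sinh s) - sin t * (p $ 2 * cosh s + q $ 1 * sinh s))
            (sin t * (p $ 1 * cosh s - q $ 2 * sinh s) + cos t * (p $ 2 * cosh s + q $ 1 * sinh s))
            (p $ 3)"

lemma LR_alg:
  fixes a b :: quat and s t :: real and h z :: complex
  assumes dP: "\<And>k. dPhi f fs k z = Complex (a$k) (-(b$k))"
    and conf1: "a \<bullet> a = b \<bullet> b" and conf2: "a \<bullet> b = 0"
    and w0: "W_omega f fs z \<noteq> 0"
  shows "(let A = LR_forms f fs (exp (Complex s t)) z in
            Quat (Re (A!0 * h)) (Re (A!1 * h)) (Re (A!2 * h)) (Re (A!3 * h)))
         = T1 s t (Re h *\<^sub>R a + Im h *\<^sub>R b) (Im h *\<^sub>R a - Re h *\<^sub>R b)"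
proof -
  define E where "E = exp s"
  define c where "c = cos t"
  define snt where "snt = sin t"
  define \<sigma> where "\<sigma> = exp (Complex s t)"
  define \<omega> where "\<omega> = W_omega f fs z"
  define P where "P = dPhi f fs 1 z + \<i> * dPhi f fs 2 z"
  have E0: "E > 0" unfolding E_def by simp
  have cs: "c^2 + snt^2 = 1" unfolding c_def snt_def by simp
  have sig: "\<sigma> = Complex (E * c) (E * snt)" unfolding \<sigma>_def E_def c_def snt_def
    by (simp add: exp_eq_polar cis.code complex_eq_iff)
  have sig0: "\<sigma> \<noteq> 0" unfolding \<sigma>_def by simp
  have isig: "inverse \<sigma> = Complex (c / E) (- snt / E)"
  proof -
    have "(E * c)^2 + (E * snt)^2 = E^2" using cs by (simp add: algebra_simps power2_eq_square) (metis distrib_left mult.right_neutral mult.assoc)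
    then show ?thesis unfolding sig using E0 by (simp add: complex_eq_iff Re_divide Im_divide power2_eq_square field_simps)
  qed
  have w: "\<omega> = Complex (a$1 - b$2) (- b$1 - a$2)"
    unfolding \<omega>_def W_omega_def dP by (simp add: complex_eq_iff)
  have Pf: "P = Complex (a$1 + b$2) (a$2 - b$1)"
    unfolding P_def dP by (simp add: complex_eq_iff)
  have w0': "\<omega> \<noteq> 0" using w0 unfolding \<omega>_def .
  have key: "(dPhi f fs 3 z)^2 + (dPhi f fs 0 z)^2 = - (\<omega> * P)"
    using conf1 conf2 unfolding w Pf dP inner_quat
    by (simp add: complex_eq_iff power2_eq_square) algebra
  have A: "LR_forms f fs \<sigma> z = [dPhi f fs 0 z, (\<omega> / \<sigma> + \<sigma> * P) / 2,
             \<i> / 2 * (\<omega> / \<sigma> - \<sigma> * P), dPhi f fs 3 z]"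
  proof -
    have e1: "(1 - (\<sigma> * (dPhi f fs 3 z / \<omega>))\<^sup>2 - (\<sigma> * (dPhi f fs 0 z / \<omega>))\<^sup>2) / 2 * (\<omega> / \<sigma>)
        = (\<omega> / \<sigma> - \<sigma> * ((dPhi f fs 3 z)^2 + (dPhi f fs 0 z)^2) / \<omega>) / 2"
      using sig0 w0' by (simp add: field_simps power2_eq_square)
    have e2: "\<i> / 2 * (1 + (\<sigma> * (dPhi f fs 3 z / \<omega>))\<^sup>2 + (\<sigma> * (dPhi f fs 0 z / \<omega>))\<^sup>2) * (\<omega> / \<sigma>)
        = \<i> / 2 * (\<omega> / \<sigma> + \<sigma> * ((dPhi f fs 3 z)^2 + (dPhi f fs 0 z)^2) / \<omega>)"
      using sig0 w0' by (simp add: field_simps power2_eq_square)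
    show ?thesis
      unfolding LR_forms_def Let_def W_g1_def W_g2_def \<omega>_def[symmetric] e1 e2 key
      using sig0 w0' by (simp add: field_simps)
  qed
  define x where "x = Re h"
  define y where "y = Im h"
  define wr where "wr = a$1 - b$2"
  define wi where "wi = - b$1 - a$2"
  define pr where "pr = a$1 + b$2"
  define pim where "pim = a$2 - b$1"
  define Ur where "Ur = (wr * c + wi * snt) / E"
  define Ui where "Ui = (wi * c - wr * snt) / E"
  define Vr where "Vr = E * (c * pr - snt * pim)"
  define Vi where "Vi = E * (c * pim + snt * pr)"
  have hU: "\<omega> / \<sigma> = Complex Ur Ui"
    unfolding divide_inverse isig w Ur_def Ui_def wr_def wi_def using E0 by (simp add: complex_eq_iff field_simps)
  have hV: "\<sigma> * P = Complex Vr Vi"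
    unfolding sig Pf Vr_def Vi_def pr_def pim_def by (simp add: complex_eq_iff field_simps)
  have h: "h = Complex x y" unfolding x_def y_def by simp
  have R0: "Re (dPhi f fs 0 z * h) = a$0 * x + b$0 * y" unfolding dP h by simp
  have R3: "Re (dPhi f fs 3 z * h) = a$3 * x + b$3 * y" unfolding dP h by simp
  have R1: "Re ((\<omega> / \<sigma> + \<sigma> * P) / 2 * h) = ((Ur + Vr) * x - (Ui + Vi) * y) / 2"
    unfolding hU hV h by simp
  have R2: "Re (\<i> / 2 * (\<omega> / \<sigma> - \<sigma> * P) * h) = - ((Ur - Vr) * y + (Ui - Vi) * x) / 2"
  proof -
    have g: "Re (\<i> / 2 * Z * h') = - (Re Z * Im h' + Im Z * Re h') / 2" for Z h'
      by (simp add: field_simps)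
    show ?thesis unfolding g unfolding hU hV h by simp
  qed
  have ch: "cosh s = (E + 1/E)/2" unfolding E_def cosh_def by (simp add: exp_minus field_simps)
  have sh: "sinh s = (E - 1/E)/2" unfolding E_def sinh_def by (simp add: exp_minus field_simps)
  have T: "T1 s t (Re h *\<^sub>R a + Im h *\<^sub>R b) (Im h *\<^sub>R a - Re h *\<^sub>R b) =
    Quat (a$0 * x + b$0 * y) (((Ur + Vr) * x - (Ui + Vi) * y) / 2) (- ((Ur - Vr) * y + (Ui - Vi) * x) / 2) (a$3 * x + b$3 * y)"
    unfolding T1_def quat_eq_iff x_def[symmetric] y_def[symmetric] ch sh c_def[symmetric] snt_def[symmetric]
      Ur_def Ui_def Vr_def Vi_def wr_def wi_def pr_def pim_def
    using E0 apply (simp add: field_simps)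
    done
  have L: "LR_forms f fs (exp (Complex s t)) z ! 0 = dPhi f fs 0 z"
    "LR_forms f fs (exp (Complex s t)) z ! 1 = (\<omega> / \<sigma> + \<sigma> * P) / 2"
    "LR_forms f fs (exp (Complex s t)) z ! 2 = \<i> / 2 * (\<omega> / \<sigma> - \<sigma> * P)"
    "LR_forms f fs (exp (Complex s t)) z ! 3 = dPhi f fs 3 z"
    unfolding \<sigma>_def[symmetric] A by simp_all
  show ?thesis
    unfolding Let_def L R0 R1 R2 R3 T ..
qed

lemma lin_decomp:
  fixes L :: "complex \<Rightarrow> 'a::real_vector"
  assumes "linear L"
  shows "L h = Re h *\<^sub>R L 1 + Im h *\<^sub>R L \<i>"
proof -
  have "h = Re h *\<^sub>R 1 + Im h *\<^sub>R \<i>" by (simp add: complex_eq_iff)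
  then have "L h = L (Re h *\<^sub>R 1 + Im h *\<^sub>R \<i>)" by simp
  also have "\<dots> = Re h *\<^sub>R L 1 + Im h *\<^sub>R L \<i>"
    using assms by (simp add: linear_add linear_scale)
  finally show ?thesis .
qed

lemma Quat_basis: "Quat a b c d = a *\<^sub>R Quat 1 0 0 0 + b *\<^sub>R Quat 0 1 0 0 + c *\<^sub>R Quat 0 0 1 0 + d *\<^sub>R Quat 0 0 0 1"
  by (simp add: quat_eq_iff)

lemma has_derivative_Quat:
  assumes "(a has_derivative a') F" "(b has_derivative b') F" "(c has_derivative c') F" "(d has_derivative d') F"
  shows "((\<lambda>x. Quat (a x) (b x) (c x) (d x)) has_derivative (\<lambda>h. Quat (a' h) (b' h) (c' h) (d' h))) F"
  unfolding Quat_basis[of "a _"] Quat_basis[of "a' _"]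
  by (intro has_derivative_add has_derivative_scaleR_left assms)

lemma has_derivative_nth:
  fixes f f' :: "'a::real_normed_vector \<Rightarrow> quat"
  assumes "(f has_derivative f') F"
  shows "((\<lambda>x. f x $ k) has_derivative (\<lambda>h. f' h $ k)) F"
  using bounded_linear.has_derivative[OF bounded_linear_vec_nth assms] .

lemma T1_deriv:
  fixes f fs :: "complex \<Rightarrow> quat"
  assumes "(f has_derivative Df) F" "(fs has_derivative Dfs) F"
  shows "((\<lambda>z. T1 s t (f z) (fs z)) has_derivative (\<lambda>h. T1 s t (Df h) (Dfs h))) F"
  unfolding T1_def
  by (intro has_derivative_Quat has_derivative_nth assms derivative_intros)

lemma Phi_deriv:
  fixes f fs :: "complex \<Rightarrow> quat"
  assumes df: "(f has_derivative Df) (at z)" and dfs: "(fs has_derivative (\<lambda>h. - Df (\<i> * h))) (at z)"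
  shows "(Phi f fs k has_field_derivative Complex (Df 1 $ k) (- (Df \<i> $ k))) (at z)"
proof -
  have lin: "linear Df" using has_derivative_linear[OF df] .
  have ph: "Phi f fs k = (\<lambda>z. complex_of_real (f z $ k) + \<i> * complex_of_real (fs z $ k))"
    by (rule ext) (simp add: Phi_def Complex_eq)
  have d: "((\<lambda>z. complex_of_real (f z $ k) + \<i> * complex_of_real (fs z $ k)) has_derivative
      (\<lambda>h. complex_of_real (Df h $ k) + \<i> * complex_of_real ((- Df (\<i> * h)) $ k))) (at z)"
    by (intro has_derivative_add has_derivative_mult_right
        bounded_linear.has_derivative[OF bounded_linear_of_real] has_derivative_nth df dfs)
  have eq: "(\<lambda>h. complex_of_real (Df h $ k) + \<i> * complex_of_real ((- Df (\<i> * h)) $ k))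
      = (*) (Complex (Df 1 $ k) (- (Df \<i> $ k)))"
  proof
    fix h
    have e1: "Df h = Re h *\<^sub>R Df 1 + Im h *\<^sub>R Df \<i>" by (rule lin_decomp[OF lin])
    have e2: "Df (\<i> * h) = (- Im h) *\<^sub>R Df 1 + Re h *\<^sub>R Df \<i>"
      using lin_decomp[OF lin, of "\<i> * h"] by simp
    show "complex_of_real (Df h $ k) + \<i> * complex_of_real ((- Df (\<i> * h)) $ k)
       = Complex (Df 1 $ k) (- (Df \<i> $ k)) * h"
      unfolding e2 e1 by (simp add: complex_eq_iff algebra_simps)
  qed
  show ?thesis unfolding has_field_derivative_def ph using d unfolding eq .
qed

lemma part1:
  fixes U :: "complex set" and f fs F :: "complex \<Rightarrow> quat" and s t :: real
  assumes oU: "open U" and cU: "connected U"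
    and ms: "minimal_surface_on U f"
    and cs: "conjugate_surface_on U f fs"
    and ex: "\<exists>z\<in>U. W_omega f fs z \<noteq> 0"
    and lr: "lopez_ros_deformation U f fs (exp (Complex s t)) F"
  shows "\<exists>c. \<forall>z\<in>U. F z = T1 s t (f z) (fs z) + c"
proof -
  obtain Df Dfs where D: "\<forall>z\<in>U. (f has_derivative Df z) (at z) \<and> (fs has_derivative Dfs z) (at z) \<and>
      (\<forall>h. Dfs z h = - Df z (\<i> * h))"
    using cs unfolding conjugate_surface_on_def by blast
  have df: "(f has_derivative Df z) (at z)" if "z \<in> U" for z using D that by blast
  have dfs: "(fs has_derivative (\<lambda>h. - Df z (\<i> * h))) (at z)" if "z \<in> U" for z
  proof -
    have "Dfs z = (\<lambda>h. - Df z (\<i> * h))" using D that by auto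
    moreover have "(fs has_derivative Dfs z) (at z)" using D that by blast
    ultimately show ?thesis by simp
  qed
  obtain Df' where C: "\<forall>z\<in>U. (f has_derivative Df' z) (at z) \<and> Df' z 1 \<noteq> 0 \<and>
      Df' z 1 \<bullet> Df' z 1 = Df' z \<i> \<bullet> Df' z \<i> \<and> Df' z 1 \<bullet> Df' z \<i> = 0"
    using ms unfolding minimal_surface_on_def conformal_immersion_on_def by blast
  have conf: "Df z 1 \<bullet> Df z 1 = Df z \<i> \<bullet> Df z \<i> \<and> Df z 1 \<bullet> Df z \<i> = 0" if "z \<in> U" for z
  proof -
    have "(f has_derivative Df' z) (at z)" using C that by blast
    then have "Df' z = Df z" by (rule has_derivative_unique[OF _ df[OF that]])
    moreover have "Df' z 1 \<bullet> Df' z 1 = Df' z \<i> \<bullet> Df' z \<i> \<and> Df' z 1 \<bullet> Df' z \<i> = 0"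
      using C that by blast
    ultimately show ?thesis by simp
  qed
  have lin: "linear (Df z)" if "z \<in> U" for z using has_derivative_linear[OF df[OF that]] .
  have dPh: "(Phi f fs k has_field_derivative Complex (Df z 1 $ k) (- (Df z \<i> $ k))) (at z)" if "z \<in> U" for z k
    by (rule Phi_deriv[OF df[OF that] dfs[OF that]])
  have dP: "dPhi f fs k z = Complex (Df z 1 $ k) (- (Df z \<i> $ k))" if "z \<in> U" for z k
    unfolding dPhi_def by (rule DERIV_imp_deriv[OF dPh[OF that]])
  have holP: "Phi f fs k holomorphic_on U" for k
    unfolding holomorphic_on_open[OF oU] using dPh by blast
  have Weq: "W_omega f fs = (\<lambda>z. deriv (Phi f fs 1) z - \<i> * deriv (Phi f fs 2) z)"
    by (rule ext) (simp add: W_omega_def dPhi_def)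
  have holW: "W_omega f fs holomorphic_on U"
    unfolding Weq
    by (rule holomorphic_on_diff[OF holomorphic_deriv[OF holP oU] holomorphic_on_mult[OF holomorphic_on_const holomorphic_deriv[OF holP oU]]])
  have contW: "continuous (at z) (W_omega f fs)" if "z \<in> U" for z
    using holomorphic_on_imp_continuous_on[OF holW] oU that continuous_on_eq_continuous_at by blast
  define T where "T z = T1 s t (f z) (fs z)" for z
  define G where "G z = F z - T z" for z
  have dT: "(T has_derivative (\<lambda>h. T1 s t (Df z h) (- Df z (\<i> * h)))) (at z)" if "z \<in> U" for z
    unfolding T_def[abs_def] by (rule T1_deriv[OF df[OF that] dfs[OF that]])
  have contT: "continuous_on U T"
    by (intro continuous_at_imp_continuous_on ballI has_derivative_continuous[OF dT])
  have contG: "continuous_on U G"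
  proof -
    have "continuous_on U F" using lr unfolding lopez_ros_deformation_def by blast
    then show ?thesis unfolding G_def[abs_def] by (rule continuous_on_diff[OF _ contT])
  qed
  have dG: "(G has_derivative (\<lambda>h. 0)) (at z)" if z: "z \<in> U" and w: "W_omega f fs z \<noteq> 0" for z
  proof -
    have dF: "(F has_derivative (\<lambda>h. let A = LR_forms f fs (exp (Complex s t)) z in
            Quat (Re (A!0 * h)) (Re (A!1 * h)) (Re (A!2 * h)) (Re (A!3 * h)))) (at z)"
      using lr z w unfolding lopez_ros_deformation_def by blast
    have eq: "(\<lambda>h. let A = LR_forms f fs (exp (Complex s t)) z in
            Quat (Re (A!0 * h)) (Re (A!1 * h)) (Re (A!2 * h)) (Re (A!3 * h)))
        = (\<lambda>h. T1 s t (Df z h) (- Df z (\<i> * h)))"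
    proof
      fix h
      have e1: "Df z h = Re h *\<^sub>R Df z 1 + Im h *\<^sub>R Df z \<i>" by (rule lin_decomp[OF lin[OF z]])
      have e2: "- Df z (\<i> * h) = Im h *\<^sub>R Df z 1 - Re h *\<^sub>R Df z \<i>"
        using lin_decomp[OF lin[OF z], of "\<i> * h"] by simp
      show "(let A = LR_forms f fs (exp (Complex s t)) z in
            Quat (Re (A!0 * h)) (Re (A!1 * h)) (Re (A!2 * h)) (Re (A!3 * h)))
          = T1 s t (Df z h) (- Df z (\<i> * h))"
        unfolding e1 e2
        by (rule LR_alg[OF dP[OF z] conjunct1[OF conf[OF z]] conjunct2[OF conf[OF z]] w])
    qed
    have "(G has_derivative (\<lambda>h. T1 s t (Df z h) (- Df z (\<i> * h)) - T1 s t (Df z h) (- Df z (\<i> * h)))) (at z)"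
      unfolding G_def[abs_def] using has_derivative_diff[OF dF[unfolded eq] dT[OF z]] .
    then show ?thesis by simp
  qed
  have loc: "\<exists>r>0. ball z0 r \<subseteq> U \<and> (\<forall>x\<in>ball z0 r. G x = G z0)" if z0: "z0 \<in> U" for z0
  proof -
    obtain r where r: "r > 0" "ball z0 r \<subseteq> U" "\<forall>x\<in>ball z0 r - {z0}. W_omega f fs x \<noteq> 0"
    proof (cases "W_omega f fs z0 = 0")
      case True
      obtain \<beta> where "\<beta> \<in> U" "W_omega f fs \<beta> \<noteq> 0" using ex by blast
      from isolated_zeros[OF holW oU cU z0 True this] obtain r where
        "0 < r" "ball z0 r \<subseteq> U" "\<And>z. z \<in> ball z0 r - {z0} \<Longrightarrow> W_omega f fs z \<noteq> 0" by blast
      then show ?thesis using that by blast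
    next
      case False
      obtain e1 where e1: "e1 > 0" "\<forall>y. dist z0 y < e1 \<longrightarrow> W_omega f fs y \<noteq> 0"
        using continuous_at_avoid[OF contW[OF z0] False] by blast
      obtain e2 where e2: "e2 > 0" "ball z0 e2 \<subseteq> U"
        using oU z0 by (meson open_contains_ball_eq)
      show ?thesis
      proof (rule that[of "min e1 e2"])
        show "min e1 e2 > 0" using e1 e2 by simp
        show "ball z0 (min e1 e2) \<subseteq> U" using e2 by auto
        show "\<forall>x\<in>ball z0 (min e1 e2) - {z0}. W_omega f fs x \<noteq> 0"
        proof
          fix x assume "x \<in> ball z0 (min e1 e2) - {z0}"
          then have "dist z0 x < e1" by simp
          then show "W_omega f fs x \<noteq> 0" using e1 by blast
        qed
      qed
    qed
    have "G constant_on ball z0 r"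
    proof (rule has_derivative_zero_connected_constant_on[of _ "{z0}"])
      show "continuous_on (ball z0 r) G" by (rule continuous_on_subset[OF contG r(2)])
      show "\<forall>x\<in>ball z0 r - {z0}. (G has_derivative (\<lambda>h. 0)) (at x within ball z0 r)"
      proof
        fix x assume x: "x \<in> ball z0 r - {z0}"
        then have "x \<in> U" "W_omega f fs x \<noteq> 0" using r by auto
        then show "(G has_derivative (\<lambda>h. 0)) (at x within ball z0 r)"
          by (rule has_derivative_at_withinI[OF dG])
      qed
    qed simp_all
    then obtain y where "\<forall>x\<in>ball z0 r. G x = y" unfolding constant_on_def by blast
    moreover have "z0 \<in> ball z0 r" using r by simp
    ultimately have "\<forall>x\<in>ball z0 r. G x = G z0" by simp
    then show ?thesis using r(1,2) by blast
  qed
  obtain z1 where z1: "z1 \<in> U" using ex by blast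
  have "\<forall>x\<in>U. G x = G z1"
  proof (rule continuous_levelset_openin[OF cU contG])
    show "openin (top_of_set U) {x \<in> U. G x = G z1}"
    proof (rule open_subset)
      show "{x \<in> U. G x = G z1} \<subseteq> U" by blast
      show "open {x \<in> U. G x = G z1}"
        unfolding open_contains_ball
      proof
        fix x assume x: "x \<in> {x \<in> U. G x = G z1}"
        have xU: "x \<in> U" and Gx: "G x = G z1" using x by auto
        obtain r where r: "r > 0" "ball x r \<subseteq> U" "\<forall>y\<in>ball x r. G y = G x" using loc[OF xU] by blast
        have "ball x r \<subseteq> {x \<in> U. G x = G z1}"
        proof
          fix y assume y: "y \<in> ball x r"
          then have "y \<in> U" using r(2) by blast
          moreover have "G y = G z1" using r(3) y Gx by simp
          ultimately show "y \<in> {x \<in> U. G x = G z1}" by simp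
        qed
        then show "\<exists>e>0. ball x e \<subseteq> {x \<in> U. G x = G z1}" using r(1) by blast
      qed
    qed
    show "\<exists>x\<in>U. G x = G z1" using z1 by blast
  qed
  then have "\<forall>z\<in>U. F z = T1 s t (f z) (fs z) + G z1"
  proof (intro ballI)
    fix z assume "z \<in> U" "\<forall>x\<in>U. G x = G z1"
    then have "G z = G z1" by blast
    moreover have "F z = T1 s t (f z) (fs z) + G z" unfolding G_def T_def by simp
    ultimately show "F z = T1 s t (f z) (fs z) + G z1" by simp
  qed
  then show ?thesis by blast
qed

theorem mainTheorem14:
  fixes U :: "complex set" and f fs F :: "complex \<Rightarrow> quat" and s t :: real
  assumes "open U" and "connected U"
    and "minimal_surface_on U f"
    and "conjugate_surface_on U f fs"
    and "\<exists>z\<in>U. W_omega f fs z \<noteq> 0"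
    and "lopez_ros_deformation U f fs (exp (Complex s t)) F"
  shows "(\<exists>c. \<forall>z\<in>U. F z = Quat
            (f z $ 0)
            (cos t * (f z $ 1 * cosh s - fs z $ 2 * sinh s)
               - sin t * (f z $ 2 * cosh s + fs z $ 1 * sinh s))
            (sin t * (f z $ 1 * cosh s - fs z $ 2 * sinh s)
               + cos t * (f z $ 2 * cosh s + fs z $ 1 * sinh s))
            (f z $ 3) + c)
       \<and> (cmod (exp (Complex s t)) \<noteq> 1 \<longrightarrow>
            (let \<mu> = (1 - exp (- Complex s t)) / (1 - exp (Complex s (- t)));
                 m = Quat (1/2) (-1/2) (-1/2) (-1/2) in
             \<mu> \<noteq> 0 \<and> \<mu> \<noteq> 1 \<and>
             (\<exists>c. \<forall>z\<in>U. F z = simple_factor_dressing \<mu> m m f fs z + c)))"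
proof -
  obtain c where c: "\<forall>z\<in>U. F z = T1 s t (f z) (fs z) + c"
    using part1[OF assms] by blast
  have P1: "\<exists>c. \<forall>z\<in>U. F z = Quat
            (f z $ 0)
            (cos t * (f z $ 1 * cosh s - fs z $ 2 * sinh s)
               - sin t * (f z $ 2 * cosh s + fs z $ 1 * sinh s))
            (sin t * (f z $ 1 * cosh s - fs z $ 2 * sinh s)
               + cos t * (f z $ 2 * cosh s + fs z $ 1 * sinh s))
            (f z $ 3) + c"
    using c unfolding T1_def by blast
  have P2: "(let \<mu> = (1 - exp (- Complex s t)) / (1 - exp (Complex s (- t)));
                 m = Quat (1/2) (-1/2) (-1/2) (-1/2) in
             \<mu> \<noteq> 0 \<and> \<mu> \<noteq> 1 \<and>
             (\<exists>c. \<forall>z\<in>U. F z = simple_factor_dressing \<mu> m m f fs z + c))"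
    if nm: "cmod (exp (Complex s t)) \<noteq> 1"
  proof -
    have s: "s \<noteq> 0" using nm by auto
    note mf = mu_facts[OF s, of t]
    have "\<forall>z\<in>U. F z = simple_factor_dressing ((1 - exp (- Complex s t)) / (1 - exp (Complex s (- t))))
         (Quat (1/2) (-1/2) (-1/2) (-1/2)) (Quat (1/2) (-1/2) (-1/2) (-1/2)) f fs z + c"
      using c unfolding dressing[OF s] T1_def by blast
    then show ?thesis using mf(1,2) unfolding Let_def by blast
  qed
  show ?thesis using P1 P2 by blast
qed

end
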